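(* Let $\Delta\ge1$, $\beta\ge0$, $\eta\in[0,1)$, and let $G$ be a finite graph of maximum degree at most $\Delta$. If $\lambda>0$ is such that $\eta_G(\beta,\lambda)=\eta$, then \[1\le\lambda\le\sqrt{\frac{1+\eta}{1-\eta}}\,e^{\beta\Delta/2}.\]
   Context: The Ising model on $G$ at inverse temperature $\beta$ and activity $\lambda>0$ is $\mu_{G,\beta,\lambda}(\sigma)\propto e^{\frac{\beta}{2}\sum_{uv\in E(G)}\sigma_u\sigma_v}\lambda^{M(\sigma)}$ on $\{\pm1\}^{V(G)}$ with $M(\sigma)=\sum_v\sigma_v$; the mean magnetization is $\eta_G(\beta,\lambda)=\mathbb{E}_{\mu_{G,\beta,\lambda}}[M(\sigma)]/|V(G)|$. *)

theory Defs
  imports "HOL-Library.FuncSet" Complex_Main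
begin

definition simple_graph :: "'a set \<Rightarrow> ('a \<Rightarrow> 'a \<Rightarrow> bool) \<Rightarrow> bool" where
  "simple_graph V E \<longleftrightarrow> finite V \<and> (\<forall>u v. E u v \<longrightarrow> u \<in> V \<and> v \<in> V)
     \<and> (\<forall>u v. E u v \<longrightarrow> E v u) \<and> (\<forall>u. \<not> E u u)"

definition degree :: "'a set \<Rightarrow> ('a \<Rightarrow> 'a \<Rightarrow> bool) \<Rightarrow> 'a \<Rightarrow> nat" where
  "degree V E v = card {u \<in> V. E v u}"

definition max_degree_le :: "'a set \<Rightarrow> ('a \<Rightarrow> 'a \<Rightarrow> bool) \<Rightarrow> nat \<Rightarrow> bool" where
  "max_degree_le V E \<Delta> \<longleftrightarrow> (\<forall>v \<in> V. degree V E v \<le> \<Delta>)"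

definition spins :: "'a set \<Rightarrow> ('a \<Rightarrow> real) set" where
  "spins V = PiE V (\<lambda>_. {-1, 1})"

text \<open>Sum over (unordered) edges uv of \<sigma>_u \<sigma>_v: each edge appears twice among ordered pairs.\<close>
definition edge_sum :: "'a set \<Rightarrow> ('a \<Rightarrow> 'a \<Rightarrow> bool) \<Rightarrow> ('a \<Rightarrow> real) \<Rightarrow> real" where
  "edge_sum V E \<sigma> = (\<Sum>p \<in> {(u, v) \<in> V \<times> V. E u v}. \<sigma> (fst p) * \<sigma> (snd p)) / 2"

definition magnetization :: "'a set \<Rightarrow> ('a \<Rightarrow> real) \<Rightarrow> real" where
  "magnetization V \<sigma> = (\<Sum>v \<in> V. \<sigma> v)"

definition ising_weight :: "'a set \<Rightarrow> ('a \<Rightarrow> 'a \<Rightarrow> bool) \<Rightarrow> real \<Rightarrow> real \<Rightarrow> ('a \<Rightarrow> real) \<Rightarrow> real" where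
  "ising_weight V E \<beta> lam \<sigma> = exp (\<beta> / 2 * edge_sum V E \<sigma>) * lam powr magnetization V \<sigma>"

definition partition_fn :: "'a set \<Rightarrow> ('a \<Rightarrow> 'a \<Rightarrow> bool) \<Rightarrow> real \<Rightarrow> real \<Rightarrow> real" where
  "partition_fn V E \<beta> lam = (\<Sum>\<sigma> \<in> spins V. ising_weight V E \<beta> lam \<sigma>)"

definition mean_magnetization :: "'a set \<Rightarrow> ('a \<Rightarrow> 'a \<Rightarrow> bool) \<Rightarrow> real \<Rightarrow> real \<Rightarrow> real" where
  "mean_magnetization V E \<beta> lam =
     ((\<Sum>\<sigma> \<in> spins V. magnetization V \<sigma> * ising_weight V E \<beta> lam \<sigma>) / partition_fn V E \<beta> lam)
     / real (card V)"

end

theory Submission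
  imports Defs
begin

lemma sum_invol:
  assumes "\<And>x. x \<in> S \<Longrightarrow> g x \<in> S" "\<And>x. x \<in> S \<Longrightarrow> g (g x) = x"
  shows "sum f S = sum (\<lambda>x. f (g x)) S"
  by (rule sum.reindex_bij_witness[of S g g]) (auto simp: assms)

lemma edge_diff:
  assumes G: "simple_graph V E" and v: "v \<in> V"
  shows "edge_sum V E (\<sigma>(v:=a)) - edge_sum V E (\<sigma>(v:=b))
       = (a - b) * (\<Sum>u\<in>{u\<in>V. E v u}. \<sigma> u)"
proof -
  define P where "P = {(u, w) \<in> V \<times> V. E u w}"
  have fin: "finite V" using G by (simp add: simple_graph_def)
  have finP: "finite P" unfolding P_def
    by (rule finite_subset[of _ "V \<times> V"]) (auto simp: fin)
  have irr: "\<And>u. \<not> E u u" and sym: "\<And>u w. E u w \<Longrightarrow> E w u"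
    using G by (auto simp: simple_graph_def)
  have pt: "(\<sigma>(v:=a)) (fst p) * (\<sigma>(v:=a)) (snd p) - (\<sigma>(v:=b)) (fst p) * (\<sigma>(v:=b)) (snd p)
     = (a - b) * ((if fst p = v then \<sigma> (snd p) else 0) + (if snd p = v then \<sigma> (fst p) else 0))"
    if "p \<in> P" for p
    using that irr unfolding P_def by (cases p) (auto simp: algebra_simps)
  have s1: "(\<Sum>p\<in>P. if fst p = v then \<sigma> (snd p) else 0) = (\<Sum>u\<in>{u\<in>V. E v u}. \<sigma> u)"
  proof -
    have "(\<Sum>p\<in>P. if fst p = v then \<sigma> (snd p) else 0) = (\<Sum>p\<in>{p\<in>P. fst p = v}. \<sigma> (snd p))"
      using finP by (simp add: sum.inter_filter)
    also have "{p\<in>P. fst p = v} = (\<lambda>u. (v, u)) ` {u\<in>V. E v u}"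
      unfolding P_def using v by auto
    also have "(\<Sum>p\<in>(\<lambda>u. (v, u)) ` {u\<in>V. E v u}. \<sigma> (snd p)) = (\<Sum>u\<in>{u\<in>V. E v u}. \<sigma> u)"
      by (subst sum.reindex) (auto simp: inj_on_def)
    finally show ?thesis .
  qed
  have s2: "(\<Sum>p\<in>P. if snd p = v then \<sigma> (fst p) else 0) = (\<Sum>u\<in>{u\<in>V. E v u}. \<sigma> u)"
  proof -
    have "(\<Sum>p\<in>P. if snd p = v then \<sigma> (fst p) else 0) = (\<Sum>p\<in>{p\<in>P. snd p = v}. \<sigma> (fst p))"
      using finP by (simp add: sum.inter_filter)
    also have "{p\<in>P. snd p = v} = (\<lambda>u. (u, v)) ` {u\<in>V. E v u}"
      unfolding P_def using v sym by auto
    also have "(\<Sum>p\<in>(\<lambda>u. (u, v)) ` {u\<in>V. E v u}. \<sigma> (fst p)) = (\<Sum>u\<in>{u\<in>V. E v u}. \<sigma> u)"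
      by (subst sum.reindex) (auto simp: inj_on_def)
    finally show ?thesis .
  qed
  have "edge_sum V E (\<sigma>(v:=a)) - edge_sum V E (\<sigma>(v:=b))
     = (\<Sum>p\<in>P. (\<sigma>(v:=a)) (fst p) * (\<sigma>(v:=a)) (snd p) - (\<sigma>(v:=b)) (fst p) * (\<sigma>(v:=b)) (snd p)) / 2"
    unfolding edge_sum_def P_def by (simp add: sum_subtractf diff_divide_distrib)
  also have "\<dots> = (\<Sum>p\<in>P. (a - b) * ((if fst p = v then \<sigma> (snd p) else 0) + (if snd p = v then \<sigma> (fst p) else 0))) / 2"
    using pt by (simp cong: sum.cong)
  also have "\<dots> = (a - b) * ((\<Sum>p\<in>P. if fst p = v then \<sigma> (snd p) else 0) + (\<Sum>p\<in>P. if snd p = v then \<sigma> (fst p) else 0)) / 2"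
    by (simp only: sum.distrib[symmetric] sum_distrib_left)
  also have "\<dots> = (a - b) * (\<Sum>u\<in>{u\<in>V. E v u}. \<sigma> u)"
    using s1 s2 by simp
  finally show ?thesis .
qed

lemma mag_diff:
  assumes "finite V" "v \<in> V"
  shows "magnetization V (\<sigma>(v:=a)) = magnetization V (\<sigma>(v:=b)) + (a - b)"
proof -
  have "magnetization V (\<sigma>(v:=a)) = a + (\<Sum>u\<in>V-{v}. \<sigma> u)"
    unfolding magnetization_def using assms by (simp add: sum.remove)
  moreover have "magnetization V (\<sigma>(v:=b)) = b + (\<Sum>u\<in>V-{v}. \<sigma> u)"
    unfolding magnetization_def using assms by (simp add: sum.remove)
  ultimately show ?thesis by simp
qed

lemma weight_flip:
  assumes G: "simple_graph V E" and md: "max_degree_le V E \<Delta>" and v: "v \<in> V"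
    and sp: "\<sigma> \<in> spins V" and sv: "\<sigma> v = 1" and b: "\<beta> \<ge> 0" and l: "lam > 0"
  shows "ising_weight V E \<beta> lam \<sigma> \<ge> lam^2 * exp (-\<beta> * real \<Delta>) * ising_weight V E \<beta> lam (\<sigma>(v:=-1))"
proof -
  have fin: "finite V" using G by (simp add: simple_graph_def)
  define s where "s = (\<Sum>u\<in>{u\<in>V. E v u}. \<sigma> u)"
  have st: "\<sigma> = \<sigma>(v:=1)" using sv by (simp add: fun_eq_iff)
  have es: "edge_sum V E \<sigma> = edge_sum V E (\<sigma>(v:=-1)) + 2 * s"
    using edge_diff[OF G v, of \<sigma> 1 "-1"] st unfolding s_def by simp
  have ms: "magnetization V \<sigma> = magnetization V (\<sigma>(v:=-1)) + 2"
    using mag_diff[OF fin v, of \<sigma> 1 "-1"] st by simp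
  have "\<bar>s\<bar> \<le> (\<Sum>u\<in>{u\<in>V. E v u}. \<bar>\<sigma> u\<bar>)" unfolding s_def by (rule sum_abs)
  also have "\<dots> = (\<Sum>u\<in>{u\<in>V. E v u}. 1)"
    using sp unfolding spins_def by (intro sum.cong) (auto simp: PiE_iff)
  also have "\<dots> = real (degree V E v)" by (simp add: degree_def)
  also have "\<dots> \<le> real \<Delta>" using md v by (simp add: max_degree_le_def)
  finally have sb: "s \<ge> - real \<Delta>" by simp
  have "\<beta> * s \<ge> - \<beta> * real \<Delta>" using mult_left_mono[OF sb b] by simp
  hence ex: "exp (\<beta> * s) \<ge> exp (-\<beta> * real \<Delta>)" by simp
  define w' where "w' = ising_weight V E \<beta> lam (\<sigma>(v:=-1))"
  have w'pos: "w' > 0" unfolding w'_def ising_weight_def using l by simp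
  have "ising_weight V E \<beta> lam \<sigma> = w' * exp (\<beta> * s) * lam^2"
    unfolding w'_def ising_weight_def es ms using l
    by (simp add: powr_add exp_add distrib_left algebra_simps powr_numeral)
  also have "\<dots> \<ge> w' * exp (-\<beta> * real \<Delta>) * lam^2"
    using ex w'pos l by (intro mult_right_mono mult_left_mono) auto
  finally show ?thesis unfolding w'_def by (simp add: algebra_simps)
qed

lemma flip_spins:
  assumes "\<sigma> \<in> spins V" "v \<in> V"
  shows "\<sigma>(v := - \<sigma> v) \<in> spins V"
proof -
  have "\<sigma> \<in> extensional V" using assms unfolding spins_def by (simp add: PiE_iff)
  hence "\<sigma>(v := - \<sigma> v) \<in> extensional V" using assms(2) by (simp add: extensional_def)
  moreover have "\<forall>u\<in>V. (\<sigma>(v := - \<sigma> v)) u \<in> {-1, 1}"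
    using assms unfolding spins_def by (auto simp: PiE_iff)
  ultimately show ?thesis unfolding spins_def by (simp add: PiE_iff)
qed

lemma spin_val:
  assumes "\<sigma> \<in> spins V" "v \<in> V"
  shows "\<sigma> v = 1 \<or> \<sigma> v = -1"
  using assms unfolding spins_def by (auto simp: PiE_iff)

lemma alg1:
  fixes r a b :: real
  assumes "r * b \<le> a"
  shows "(r - 1) * (a + b) \<le> (r + 1) * (a - b)"
proof -
  have e: "(r + 1) * (a - b) - (r - 1) * (a + b) = 2 * (a - r * b)" by algebra
  have "0 \<le> 2 * (a - r * b)" using assms by simp
  hence "0 \<le> (r + 1) * (a - b) - (r - 1) * (a + b)" by (simp only: e)
  thus ?thesis by simp
qed

lemma vertex_bound:
  assumes G: "simple_graph V E" and md: "max_degree_le V E \<Delta>" and v: "v \<in> V"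
    and b: "\<beta> \<ge> 0" and l: "lam > 0"
  shows "(lam^2 * exp (-\<beta> * real \<Delta>) + 1) * (\<Sum>\<sigma>\<in>spins V. \<sigma> v * ising_weight V E \<beta> lam \<sigma>)
     \<ge> (lam^2 * exp (-\<beta> * real \<Delta>) - 1) * partition_fn V E \<beta> lam"
proof -
  define r where "r = lam^2 * exp (-\<beta> * real \<Delta>)"
  define w where "w = ising_weight V E \<beta> lam"
  define S where "S = spins V"
  define fl where "fl = (\<lambda>\<sigma>::'a\<Rightarrow>real. \<sigma>(v := - \<sigma> v))"
  define A where "A = (\<Sum>\<sigma>\<in>S. \<sigma> v * w \<sigma>)"
  define Z where "Z = (\<Sum>\<sigma>\<in>S. w \<sigma>)"
  have flS: "\<And>\<sigma>. \<sigma> \<in> S \<Longrightarrow> fl \<sigma> \<in> S" unfolding S_def fl_def by (rule flip_spins[OF _ v])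
  have flfl: "\<And>\<sigma>. \<sigma> \<in> S \<Longrightarrow> fl (fl \<sigma>) = \<sigma>" unfolding fl_def by (simp add: fun_eq_iff)
  have flv: "\<And>\<sigma>. (fl \<sigma>) v = - \<sigma> v" unfolding fl_def by simp
  have inv1: "(\<Sum>\<sigma>\<in>S. (fl \<sigma>) v * w (fl \<sigma>)) = A"
    unfolding A_def by (rule sum_invol[symmetric]) (use flS flfl in auto)
  have inv2: "(\<Sum>\<sigma>\<in>S. w (fl \<sigma>)) = Z"
    unfolding Z_def by (rule sum_invol[symmetric]) (use flS flfl in auto)
  have pt: "(r - 1) * (w \<sigma> + w (fl \<sigma>)) \<le> (r + 1) * (\<sigma> v * w \<sigma> + (fl \<sigma>) v * w (fl \<sigma>))"
    if "\<sigma> \<in> S" for \<sigma>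
  proof -
    from spin_val[OF that[unfolded S_def] v] show ?thesis
    proof
      assume s1: "\<sigma> v = 1"
      have "r * w (fl \<sigma>) \<le> w \<sigma>"
        using weight_flip[OF G md v that[unfolded S_def] s1 b l] s1
        unfolding r_def w_def fl_def by simp
      from alg1[OF this] show ?thesis by (simp add: flv s1)
    next
      assume s1: "\<sigma> v = -1"
      have t1: "fl \<sigma> \<in> spins V" using flS that S_def by blast
      have t2: "(fl \<sigma>) v = 1" using s1 flv by simp
      have t3: "(fl \<sigma>)(v := -1) = \<sigma>" using s1 unfolding fl_def by (simp add: fun_eq_iff)
      have "r * w \<sigma> \<le> w (fl \<sigma>)"
        using weight_flip[OF G md v t1 t2 b l] t3 unfolding r_def w_def by simp
      from alg1[OF this] show ?thesis by (simp add: flv s1 add.commute)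
    qed
  qed
  have "(\<Sum>\<sigma>\<in>S. (r - 1) * (w \<sigma> + w (fl \<sigma>))) \<le> (\<Sum>\<sigma>\<in>S. (r + 1) * (\<sigma> v * w \<sigma> + (fl \<sigma>) v * w (fl \<sigma>)))"
    by (rule sum_mono) (rule pt)
  also have "(\<Sum>\<sigma>\<in>S. (r + 1) * (\<sigma> v * w \<sigma> + (fl \<sigma>) v * w (fl \<sigma>)))
      = (r + 1) * ((\<Sum>\<sigma>\<in>S. \<sigma> v * w \<sigma>) + (\<Sum>\<sigma>\<in>S. (fl \<sigma>) v * w (fl \<sigma>)))"
    by (simp only: sum.distrib[symmetric] sum_distrib_left)
  also have "(\<Sum>\<sigma>\<in>S. (r - 1) * (w \<sigma> + w (fl \<sigma>))) = (r - 1) * ((\<Sum>\<sigma>\<in>S. w \<sigma>) + (\<Sum>\<sigma>\<in>S. w (fl \<sigma>)))"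
    by (simp only: sum.distrib[symmetric] sum_distrib_left)
  finally have "(r - 1) * (Z + Z) \<le> (r + 1) * (A + A)"
    unfolding inv1 inv2 A_def Z_def .
  moreover have "(r - 1) * (Z + Z) = 2 * ((r - 1) * Z)" "(r + 1) * (A + A) = 2 * ((r + 1) * A)"
    by algebra+
  ultimately have "(r - 1) * Z \<le> (r + 1) * A" by linarith
  thus ?thesis unfolding r_def A_def Z_def S_def w_def partition_fn_def .
qed

lemma key_neg:
  fixes lam m :: real
  assumes "0 < lam" "lam < 1"
  shows "m * (lam powr m - lam powr (-m)) \<le> 0" and "m > 0 \<Longrightarrow> m * (lam powr m - lam powr (-m)) < 0"
proof -
  have L: "ln lam < 0" using assms by simp
  have e1: "lam powr m = exp (m * ln lam)" using assms by (simp add: powr_def mult.commute)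
  have e2: "lam powr (-m) = exp (-(m * ln lam))" using assms by (simp add: powr_def mult.commute)
  show "m * (lam powr m - lam powr (-m)) \<le> 0"
  proof (cases "m \<ge> 0")
    case True
    have "m * ln lam \<le> 0" using True L by (intro mult_nonneg_nonpos) auto
    hence "exp (m * ln lam) \<le> exp (-(m * ln lam))" by (subst exp_le_cancel_iff) linarith
    hence "lam powr m - lam powr (-m) \<le> 0" unfolding e1 e2 by linarith
    thus ?thesis using True by (intro mult_nonneg_nonpos)
  next
    case False
    have "m * ln lam \<ge> 0" using False L by (intro mult_nonpos_nonpos) auto
    hence "exp (m * ln lam) \<ge> exp (-(m * ln lam))" by (subst exp_le_cancel_iff) linarith
    hence "lam powr m - lam powr (-m) \<ge> 0" unfolding e1 e2 by linarith
    thus ?thesis using False by (intro mult_nonpos_nonneg) auto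
  qed
  assume m: "m > 0"
  have "m * ln lam < 0" using m L by (intro mult_pos_neg)
  hence "exp (m * ln lam) < exp (-(m * ln lam))" by (subst exp_less_cancel_iff) linarith
  hence "lam powr m - lam powr (-m) < 0" unfolding e1 e2 by linarith
  thus "m * (lam powr m - lam powr (-m)) < 0" using m by (intro mult_pos_neg)
qed

lemma neg_spins:
  assumes "\<sigma> \<in> spins V"
  shows "restrict (\<lambda>u. - \<sigma> u) V \<in> spins V"
    and "restrict (\<lambda>u. - (restrict (\<lambda>u. - \<sigma> u) V) u) V = \<sigma>"
  using assms unfolding spins_def by (auto simp: PiE_iff fun_eq_iff extensional_def)

lemma neg_edge:
  assumes "simple_graph V E"
  shows "edge_sum V E (restrict (\<lambda>u. - \<sigma> u) V) = edge_sum V E \<sigma>"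
  unfolding edge_sum_def by (intro arg_cong[where f="\<lambda>x. x / 2"] sum.cong) auto

lemma neg_mag: "magnetization V (restrict (\<lambda>u. - \<sigma> u) V) = - magnetization V \<sigma>"
  unfolding magnetization_def by (simp add: sum_negf)

theorem lemma17:
  fixes V :: "'a set" and E :: "'a \<Rightarrow> 'a \<Rightarrow> bool" and \<Delta> :: nat
    and \<beta> \<eta> lam :: real
  assumes "simple_graph V E" and "V \<noteq> {}"
    and "\<Delta> \<ge> 1" and "max_degree_le V E \<Delta>"
    and "\<beta> \<ge> 0" and "0 \<le> \<eta>" and "\<eta> < 1"
    and "lam > 0" and "mean_magnetization V E \<beta> lam = \<eta>"
  shows "1 \<le> lam \<and> lam \<le> sqrt ((1 + \<eta>) / (1 - \<eta>)) * exp (\<beta> * real \<Delta> / 2)"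
proof -
  note G = assms(1) and md = assms(4) and b = assms(5) and l = assms(8)
  have fin: "finite V" using G by (simp add: simple_graph_def)
  define N where "N = real (card V)"
  have Npos: "N > 0" unfolding N_def using fin assms(2) by (simp add: card_gt_0_iff)
  define S where "S = spins V"
  define w where "w = ising_weight V E \<beta> lam"
  define M where "M = magnetization V"
  define Z where "Z = (\<Sum>\<sigma>\<in>S. w \<sigma>)"
  define X where "X = (\<Sum>\<sigma>\<in>S. M \<sigma> * w \<sigma>)"
  define \<sigma>1 where "\<sigma>1 = restrict (\<lambda>_. 1::real) V"
  have finS: "finite S" unfolding S_def spins_def using fin by (simp add: finite_PiE)
  have s1S: "\<sigma>1 \<in> S" unfolding S_def spins_def \<sigma>1_def by auto
  have wpos: "\<And>\<sigma>. w \<sigma> > 0" unfolding w_def ising_weight_def using l by simp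
  have Zpos: "Z > 0" unfolding Z_def using finS s1S wpos
    by (metis empty_iff sum_pos)
  have hX: "X = \<eta> * N * Z"
    using assms(9) Zpos Npos unfolding mean_magnetization_def X_def M_def w_def Z_def S_def
      partition_fn_def N_def by (simp add: field_simps)
  have Xnn: "X \<ge> 0" using hX assms(6) Npos Zpos by simp
  have part1: "1 \<le> lam"
  proof (rule ccontr)
    assume "\<not> 1 \<le> lam"
    hence l1: "lam < 1" by simp
    define ng where "ng = (\<lambda>\<sigma>::'a\<Rightarrow>real. restrict (\<lambda>u. - \<sigma> u) V)"
    define T where "T = (\<lambda>\<sigma>. exp (\<beta> / 2 * edge_sum V E \<sigma>) * (M \<sigma> * (lam powr M \<sigma> - lam powr (- M \<sigma>))))"
    have X2: "X = (\<Sum>\<sigma>\<in>S. M (ng \<sigma>) * w (ng \<sigma>))"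
      unfolding X_def by (rule sum_invol) (use neg_spins in \<open>auto simp: S_def ng_def\<close>)
    also have "\<dots> = (\<Sum>\<sigma>\<in>S. - M \<sigma> * exp (\<beta> / 2 * edge_sum V E \<sigma>) * lam powr (- M \<sigma>))"
      unfolding ng_def M_def w_def ising_weight_def
      by (intro sum.cong refl) (simp add: neg_edge[OF G] neg_mag)
    finally have X2': "X = (\<Sum>\<sigma>\<in>S. - M \<sigma> * exp (\<beta> / 2 * edge_sum V E \<sigma>) * lam powr (- M \<sigma>))" .
    have X1: "X = (\<Sum>\<sigma>\<in>S. M \<sigma> * exp (\<beta> / 2 * edge_sum V E \<sigma>) * lam powr (M \<sigma>))"
      unfolding X_def w_def ising_weight_def M_def by (intro sum.cong refl) simp
    have "X + X = (\<Sum>\<sigma>\<in>S. M \<sigma> * exp (\<beta> / 2 * edge_sum V E \<sigma>) * lam powr (M \<sigma>)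
        + - M \<sigma> * exp (\<beta> / 2 * edge_sum V E \<sigma>) * lam powr (- M \<sigma>))"
      by (subst sum.distrib) (use X1 X2' in simp)
    also have "\<dots> = (\<Sum>\<sigma>\<in>S. T \<sigma>)"
      unfolding T_def by (intro sum.cong refl) (simp add: algebra_simps)
    also have "\<dots> = T \<sigma>1 + (\<Sum>\<sigma>\<in>S - {\<sigma>1}. T \<sigma>)" using finS s1S by (simp add: sum.remove)
    also have "\<dots> \<le> T \<sigma>1"
    proof -
      have "(\<Sum>\<sigma>\<in>S - {\<sigma>1}. T \<sigma>) \<le> 0"
        unfolding T_def
        by (rule sum_nonpos, rule mult_nonneg_nonpos) (auto intro: key_neg(1)[OF l l1])
      thus ?thesis by simp
    qed
    also have "T \<sigma>1 < 0"
    proof -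
      have "M \<sigma>1 = N" unfolding M_def magnetization_def \<sigma>1_def N_def by simp
      hence "M \<sigma>1 > 0" using Npos by simp
      thus ?thesis unfolding T_def
        by (rule mult_pos_neg[OF exp_gt_zero key_neg(2)[OF l l1]])
    qed
    finally show False using Xnn by simp
  qed
  define r where "r = lam^2 * exp (-\<beta> * real \<Delta>)"
  have vb: "\<And>v. v \<in> V \<Longrightarrow> (r - 1) * Z \<le> (r + 1) * (\<Sum>\<sigma>\<in>S. \<sigma> v * w \<sigma>)"
    using vertex_bound[OF G md _ b l] unfolding r_def Z_def S_def w_def partition_fn_def by blast
  have "(\<Sum>v\<in>V. (r - 1) * Z) \<le> (\<Sum>v\<in>V. (r + 1) * (\<Sum>\<sigma>\<in>S. \<sigma> v * w \<sigma>))"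
    by (rule sum_mono) (rule vb)
  also have "\<dots> = (r + 1) * (\<Sum>\<sigma>\<in>S. \<Sum>v\<in>V. \<sigma> v * w \<sigma>)"
    by (subst sum.swap) (simp add: sum_distrib_left)
  also have "(\<Sum>\<sigma>\<in>S. \<Sum>v\<in>V. \<sigma> v * w \<sigma>) = X"
    unfolding X_def M_def magnetization_def by (simp add: sum_distrib_right)
  finally have "N * (r - 1) * Z \<le> (r + 1) * X" unfolding N_def by simp
  hence "(N * Z) * (r - 1) \<le> (N * Z) * ((r + 1) * \<eta>)" unfolding hX by (simp add: algebra_simps)
  hence "r - 1 \<le> (r + 1) * \<eta>" using Npos Zpos by (simp add: mult_le_cancel_left_pos)
  hence "r * (1 - \<eta>) \<le> 1 + \<eta>" by (simp add: algebra_simps)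
  hence rq: "r \<le> (1 + \<eta>) / (1 - \<eta>)" using assms(7) by (simp add: pos_le_divide_eq)
  define q where "q = (1 + \<eta>) / (1 - \<eta>)"
  have qnn: "q \<ge> 0" unfolding q_def using assms(6,7) by simp
  have "lam^2 = r * exp (\<beta> * real \<Delta>)" unfolding r_def by (simp add: exp_minus field_simps)
  also have "\<dots> \<le> q * exp (\<beta> * real \<Delta>)" using rq unfolding q_def by (intro mult_right_mono) auto
  finally have l2: "lam^2 \<le> q * exp (\<beta> * real \<Delta>)" .
  have "lam = sqrt (lam^2)" using l by simp
  also have "\<dots> \<le> sqrt (q * exp (\<beta> * real \<Delta>))" using l2 by (rule real_sqrt_le_mono)
  also have "\<dots> = sqrt q * sqrt (exp (\<beta> * real \<Delta>))" by (simp add: real_sqrt_mult)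
  also have "sqrt (exp (\<beta> * real \<Delta>)) = exp (\<beta> * real \<Delta> / 2)"
  proof -
    have "exp (\<beta> * real \<Delta>) = (exp (\<beta> * real \<Delta> / 2))^2"
      by (simp add: power2_eq_square exp_add[symmetric])
    thus ?thesis by simp
  qed
  finally show ?thesis using part1 unfolding q_def by simp
qed

end
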